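(* Every object $M$ of $\bar{\mathcal{O}}$ is a direct sum of indecomposable objects of $\bar{\mathcal{O}}$.
   Context: $\mathbb{K}$ is an algebraically closed field of characteristic $0$. $\mathfrak{g}=\bigcup_{n\ge1}\mathfrak{g}_n$ is a root-reductive Lie algebra (nested finite-dimensional reductive Lie algebras with nested Cartan subalgebras, each inclusion $\mathfrak{g}_n\hookrightarrow\mathfrak{g}_{n+1}$ a root inclusion). $\mathfrak{h}$ is a splitting maximal toral subalgebra ($\mathfrak{h}\cap\mathfrak{g}_n$ maximal toral in $\mathfrak{g}_n$, $\mathfrak{g}=\mathfrak{h}\oplus\bigoplus_{\alpha\in\Delta}\mathfrak{g}^\alpha$). $\mathfrak{b}=\mathfrak{h}\oplus\mathfrak{n}$, $\mathfrak{n}=\bigoplus_{\alpha\in\Delta^+}\mathfrak{g}^\alpha$, is a splitting Borel subalgebra given by positive roots $\Delta^+$, assumed Dynkin (generated by $\mathfrak{h}$ and the simple root spaces). The extended category $\mathcal{O}$, denoted $\bar{\mathcal{O}}$, is the full subcategory of $\mathfrak{g}$-modules $M$ such that $M$ is an $\mathfrak{h}$-weight module (semisimple over $\mathfrak{h}$) with finite-dimensional weight spaces and $M$ is locally $\mathfrak{n}$-finite ($U(\mathfrak{n})\cdot v$ finite-dimensional for all $v\in M$). *)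

theory Defs
  imports Main "HOL-Computational_Algebra.Polynomial" "HOL-Library.Function_Algebras"
begin

definition alg_closed :: "'k::field itself \<Rightarrow> bool" where
  "alg_closed _ \<longleftrightarrow> (\<forall>p :: 'k poly. 0 < degree p \<longrightarrow> (\<exists>x. poly p x = 0))"

definition fin_dim :: "('k::field \<Rightarrow> 'v::ab_group_add \<Rightarrow> 'v) \<Rightarrow> 'v set \<Rightarrow> bool" where
  "fin_dim sc S \<longleftrightarrow> (\<exists>B. finite B \<and> B \<subseteq> S \<and> module.span sc B = S)"

definition lie_algebra ::
  "('k::field \<Rightarrow> 'g::ab_group_add \<Rightarrow> 'g) \<Rightarrow> ('g \<Rightarrow> 'g \<Rightarrow> 'g) \<Rightarrow> bool" where
  "lie_algebra sg br \<longleftrightarrow> vector_space sg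
     \<and> (\<forall>x y z. br (x + y) z = br x z + br y z)
     \<and> (\<forall>x y z. br x (y + z) = br x y + br x z)
     \<and> (\<forall>c x y. br (sg c x) y = sg c (br x y))
     \<and> (\<forall>c x y. br x (sg c y) = sg c (br x y))
     \<and> (\<forall>x. br x x = 0)
     \<and> (\<forall>x y z. br x (br y z) + br y (br z x) + br z (br x y) = 0)"

definition lie_subalg :: "('k::field \<Rightarrow> 'g::ab_group_add \<Rightarrow> 'g) \<Rightarrow> ('g \<Rightarrow> 'g \<Rightarrow> 'g) \<Rightarrow> 'g set \<Rightarrow> bool" where
  "lie_subalg sg br A \<longleftrightarrow> module.subspace sg A \<and> (\<forall>x\<in>A. \<forall>y\<in>A. br x y \<in> A)"

definition lie_ideal :: "('k::field \<Rightarrow> 'g::ab_group_add \<Rightarrow> 'g) \<Rightarrow> ('g \<Rightarrow> 'g \<Rightarrow> 'g) \<Rightarrow> 'g set \<Rightarrow> 'g set \<Rightarrow> bool" where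
  "lie_ideal sg br L I \<longleftrightarrow> module.subspace sg I \<and> I \<subseteq> L \<and> (\<forall>x\<in>L. \<forall>y\<in>I. br x y \<in> I)"

fun derived :: "('k::field \<Rightarrow> 'g::ab_group_add \<Rightarrow> 'g) \<Rightarrow> ('g \<Rightarrow> 'g \<Rightarrow> 'g) \<Rightarrow> 'g set \<Rightarrow> nat \<Rightarrow> 'g set" where
  "derived sg br I 0 = I"
| "derived sg br I (Suc k) =
     module.span sg {br x y | x y. x \<in> derived sg br I k \<and> y \<in> derived sg br I k}"

definition lie_solvable :: "('k::field \<Rightarrow> 'g::ab_group_add \<Rightarrow> 'g) \<Rightarrow> ('g \<Rightarrow> 'g \<Rightarrow> 'g) \<Rightarrow> 'g set \<Rightarrow> bool" where
  "lie_solvable sg br I \<longleftrightarrow> (\<exists>k. derived sg br I k = {0})"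

definition lie_center :: "('g::ab_group_add \<Rightarrow> 'g \<Rightarrow> 'g) \<Rightarrow> 'g set \<Rightarrow> 'g set" where
  "lie_center br L = {z\<in>L. \<forall>x\<in>L. br x z = 0}"

text \<open>Finite-dimensional reductive Lie (sub)algebra: the radical (largest solvable ideal)
  equals the center, i.e. every solvable ideal lies in the center.\<close>
definition reductive :: "('k::field \<Rightarrow> 'g::ab_group_add \<Rightarrow> 'g) \<Rightarrow> ('g \<Rightarrow> 'g \<Rightarrow> 'g) \<Rightarrow> 'g set \<Rightarrow> bool" where
  "reductive sg br L \<longleftrightarrow> lie_subalg sg br L \<and> fin_dim sg L
     \<and> (\<forall>I. lie_ideal sg br L I \<and> lie_solvable sg br I \<longrightarrow> I \<subseteq> lie_center br L)"

text \<open>x acts semisimply (diagonalizably) on L via the adjoint action.\<close>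
definition ad_semisimple_on :: "('k::field \<Rightarrow> 'g::ab_group_add \<Rightarrow> 'g) \<Rightarrow> ('g \<Rightarrow> 'g \<Rightarrow> 'g) \<Rightarrow> 'g set \<Rightarrow> 'g \<Rightarrow> bool" where
  "ad_semisimple_on sg br L x \<longleftrightarrow> L \<subseteq> module.span sg {y\<in>L. \<exists>c. br x y = sg c y}"

definition toral :: "('k::field \<Rightarrow> 'g::ab_group_add \<Rightarrow> 'g) \<Rightarrow> ('g \<Rightarrow> 'g \<Rightarrow> 'g) \<Rightarrow> 'g set \<Rightarrow> 'g set \<Rightarrow> bool" where
  "toral sg br L T \<longleftrightarrow> lie_subalg sg br T \<and> T \<subseteq> L \<and> (\<forall>x\<in>T. ad_semisimple_on sg br L x)"

definition max_toral :: "('k::field \<Rightarrow> 'g::ab_group_add \<Rightarrow> 'g) \<Rightarrow> ('g \<Rightarrow> 'g \<Rightarrow> 'g) \<Rightarrow> 'g set \<Rightarrow> 'g set \<Rightarrow> bool" where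
  "max_toral sg br L T \<longleftrightarrow> toral sg br L T \<and> (\<forall>T'. toral sg br L T' \<and> T \<subseteq> T' \<longrightarrow> T' = T)"

text \<open>Root space of L with respect to H for the functional \<alpha> (functionals on H are
  represented by functions 'g \<Rightarrow> 'k that vanish outside H).\<close>
definition root_space :: "('k::field \<Rightarrow> 'g::ab_group_add \<Rightarrow> 'g) \<Rightarrow> ('g \<Rightarrow> 'g \<Rightarrow> 'g) \<Rightarrow> 'g set \<Rightarrow> 'g set \<Rightarrow> ('g \<Rightarrow> 'k) \<Rightarrow> 'g set" where
  "root_space sg br L H \<alpha> = {x\<in>L. \<forall>t\<in>H. br t x = sg (\<alpha> t) x}"

definition roots :: "('k::field \<Rightarrow> 'g::ab_group_add \<Rightarrow> 'g) \<Rightarrow> ('g \<Rightarrow> 'g \<Rightarrow> 'g) \<Rightarrow> 'g set \<Rightarrow> 'g set \<Rightarrow> ('g \<Rightarrow> 'k) set" where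
  "roots sg br L H = {\<alpha>. (\<forall>t. t \<notin> H \<longrightarrow> \<alpha> t = 0) \<and> (\<exists>t\<in>H. \<alpha> t \<noteq> 0)
                        \<and> root_space sg br L H \<alpha> \<noteq> {0}}"

definition root_inclusion :: "('k::field \<Rightarrow> 'g::ab_group_add \<Rightarrow> 'g) \<Rightarrow> ('g \<Rightarrow> 'g \<Rightarrow> 'g) \<Rightarrow> 'g set \<Rightarrow> 'g set \<Rightarrow> 'g set \<Rightarrow> 'g set \<Rightarrow> bool" where
  "root_inclusion sg br L1 H1 L2 H2 \<longleftrightarrow> L1 \<subseteq> L2 \<and> H1 \<subseteq> H2 \<and>
     (\<forall>\<alpha>\<in>roots sg br L1 H1. \<exists>\<beta>\<in>roots sg br L2 H2. root_space sg br L1 H1 \<alpha> = root_space sg br L2 H2 \<beta>)"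

definition lie_hull :: "('k::field \<Rightarrow> 'g::ab_group_add \<Rightarrow> 'g) \<Rightarrow> ('g \<Rightarrow> 'g \<Rightarrow> 'g) \<Rightarrow> 'g set \<Rightarrow> 'g set" where
  "lie_hull sg br S = \<Inter>{A. lie_subalg sg br A \<and> S \<subseteq> A}"

definition simple_roots :: "('g \<Rightarrow> 'k::field) set \<Rightarrow> ('g \<Rightarrow> 'k) set" where
  "simple_roots P = {\<alpha>\<in>P. \<not> (\<exists>\<beta>\<in>P. \<exists>\<gamma>\<in>P. \<alpha> = \<beta> + \<gamma>)}"

text \<open>The nilradical n of the splitting Borel b = h \<oplus> n given by the positive roots P.\<close>
definition nil_part :: "('k::field \<Rightarrow> 'g::ab_group_add \<Rightarrow> 'g) \<Rightarrow> ('g \<Rightarrow> 'g \<Rightarrow> 'g) \<Rightarrow> 'g set \<Rightarrow> ('g \<Rightarrow> 'k) set \<Rightarrow> 'g set" where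
  "nil_part sg br h P = module.span sg (\<Union>\<alpha>\<in>P. root_space sg br UNIV h \<alpha>)"

definition borel_part :: "('k::field \<Rightarrow> 'g::ab_group_add \<Rightarrow> 'g) \<Rightarrow> ('g \<Rightarrow> 'g \<Rightarrow> 'g) \<Rightarrow> 'g set \<Rightarrow> ('g \<Rightarrow> 'k) set \<Rightarrow> 'g set" where
  "borel_part sg br h P = module.span sg (h \<union> (\<Union>\<alpha>\<in>P. root_space sg br UNIV h \<alpha>))"

text \<open>Standing assumptions: g = UNIV (of type 'g) is the union of the nested finite-dimensional
  reductive Lie algebras gs n, each inclusion a root inclusion w.r.t. the nested Cartan
  subalgebras h \<inter> gs n; h is a splitting maximal toral subalgebra; P is a set of positive
  roots (triangular decomposition) defining a splitting Borel subalgebra which is Dynkin.\<close>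
definition root_reductive_setup ::
  "('k::field \<Rightarrow> 'g::ab_group_add \<Rightarrow> 'g) \<Rightarrow> ('g \<Rightarrow> 'g \<Rightarrow> 'g) \<Rightarrow> (nat \<Rightarrow> 'g set) \<Rightarrow> 'g set
   \<Rightarrow> ('g \<Rightarrow> 'k) set \<Rightarrow> bool" where
  "root_reductive_setup sg br gs h P \<longleftrightarrow>
     lie_algebra sg br
   \<and> (\<forall>n. gs n \<subseteq> gs (Suc n)) \<and> (\<Union>n. gs n) = UNIV
   \<and> (\<forall>n. reductive sg br (gs n))
   \<and> lie_subalg sg br h
   \<and> (\<forall>n. max_toral sg br (gs n) (h \<inter> gs n))
   \<and> (\<forall>n. root_inclusion sg br (gs n) (h \<inter> gs n) (gs (Suc n)) (h \<inter> gs (Suc n)))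
   \<and> module.span sg (h \<union> (\<Union>\<alpha>\<in>roots sg br UNIV h. root_space sg br UNIV h \<alpha>)) = UNIV
   \<and> P \<subseteq> roots sg br UNIV h
   \<and> roots sg br UNIV h = P \<union> uminus ` P \<and> P \<inter> uminus ` P = {}
   \<and> (\<forall>\<alpha>\<in>P. \<forall>\<beta>\<in>P. \<alpha> + \<beta> \<in> roots sg br UNIV h \<longrightarrow> \<alpha> + \<beta> \<in> P)
   \<and> lie_hull sg br (h \<union> (\<Union>\<alpha>\<in>simple_roots P. root_space sg br UNIV h \<alpha>))
       = borel_part sg br h P"

definition g_module ::
  "('k::field \<Rightarrow> 'g::ab_group_add \<Rightarrow> 'g) \<Rightarrow> ('g \<Rightarrow> 'g \<Rightarrow> 'g) \<Rightarrow>
   ('k \<Rightarrow> 'm::ab_group_add \<Rightarrow> 'm) \<Rightarrow> ('g \<Rightarrow> 'm \<Rightarrow> 'm) \<Rightarrow> bool" where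
  "g_module sg br sm act \<longleftrightarrow> vector_space sm
     \<and> (\<forall>x y v. act (x + y) v = act x v + act y v)
     \<and> (\<forall>x v w. act x (v + w) = act x v + act x w)
     \<and> (\<forall>c x v. act (sg c x) v = sm c (act x v))
     \<and> (\<forall>c x v. act x (sm c v) = sm c (act x v))
     \<and> (\<forall>x y v. act (br x y) v = act x (act y v) - act y (act x v))"

definition submodule :: "('k::field \<Rightarrow> 'm::ab_group_add \<Rightarrow> 'm) \<Rightarrow> ('g \<Rightarrow> 'm \<Rightarrow> 'm) \<Rightarrow> 'm set \<Rightarrow> bool" where
  "submodule sm act N \<longleftrightarrow> module.subspace sm N \<and> (\<forall>x. \<forall>v\<in>N. act x v \<in> N)"

definition weight_space :: "('k::field \<Rightarrow> 'm::ab_group_add \<Rightarrow> 'm) \<Rightarrow> ('g \<Rightarrow> 'm \<Rightarrow> 'm) \<Rightarrow> 'g set \<Rightarrow> 'm set \<Rightarrow> ('g \<Rightarrow> 'k) \<Rightarrow> 'm set" where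
  "weight_space sm act h M lam = {v\<in>M. \<forall>t\<in>h. act t v = sm (lam t) v}"

text \<open>U(n) \<cdot> v: the smallest subspace containing v and stable under all of n.\<close>
definition Un_cyclic :: "('k::field \<Rightarrow> 'm::ab_group_add \<Rightarrow> 'm) \<Rightarrow> ('g \<Rightarrow> 'm \<Rightarrow> 'm) \<Rightarrow> 'g set \<Rightarrow> 'm \<Rightarrow> 'm set" where
  "Un_cyclic sm act n v = \<Inter>{W. module.subspace sm W \<and> v \<in> W \<and> (\<forall>x\<in>n. \<forall>w\<in>W. act x w \<in> W)}"

text \<open>Submodule M is an object of the extended category O (w.r.t. h and n).\<close>
definition in_Obar :: "('k::field \<Rightarrow> 'm::ab_group_add \<Rightarrow> 'm) \<Rightarrow> ('g \<Rightarrow> 'm \<Rightarrow> 'm) \<Rightarrow> 'g set \<Rightarrow> 'g set \<Rightarrow> 'm set \<Rightarrow> bool" where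
  "in_Obar sm act h n M \<longleftrightarrow> submodule sm act M
     \<and> M \<subseteq> module.span sm (\<Union>lam. weight_space sm act h M lam)
     \<and> (\<forall>lam. fin_dim sm (weight_space sm act h M lam))
     \<and> (\<forall>v\<in>M. fin_dim sm (Un_cyclic sm act n v))"

definition indecomposable_Obar :: "('k::field \<Rightarrow> 'm::ab_group_add \<Rightarrow> 'm) \<Rightarrow> ('g \<Rightarrow> 'm \<Rightarrow> 'm) \<Rightarrow> 'g set \<Rightarrow> 'g set \<Rightarrow> 'm set \<Rightarrow> bool" where
  "indecomposable_Obar sm act h n N \<longleftrightarrow> in_Obar sm act h n N \<and> N \<noteq> {0}
     \<and> (\<forall>A B. in_Obar sm act h n A \<and> in_Obar sm act h n B \<and> A \<subseteq> N \<and> B \<subseteq> N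
              \<and> N = {a + b | a b. a \<in> A \<and> b \<in> B} \<and> A \<inter> B = {0}
              \<longrightarrow> A = {0} \<or> B = {0})"

definition internal_dsum :: "('k::field \<Rightarrow> 'm::ab_group_add \<Rightarrow> 'm) \<Rightarrow> 'm set \<Rightarrow> 'm set set \<Rightarrow> bool" where
  "internal_dsum sm M Ns \<longleftrightarrow> (\<forall>N\<in>Ns. N \<subseteq> M) \<and> module.span sm (\<Union>Ns) = M
     \<and> (\<forall>F f. finite F \<and> F \<subseteq> Ns \<and> (\<forall>N\<in>F. f N \<in> N) \<and> (\<Sum>N\<in>F. f N) = 0
              \<longrightarrow> (\<forall>N\<in>F. f N = 0))"

end

theory Submission
  imports Defs
begin

locale octx = vector_space sm
  for sm :: "'k::field \<Rightarrow> 'm::ab_group_add \<Rightarrow> 'm" +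
  fixes act :: "'g \<Rightarrow> 'm \<Rightarrow> 'm" and h :: "'g set" and nn :: "'g set"
  assumes act_add: "act x (v + w) = act x v + act x w"
    and act_sm: "act x (sm c v) = sm c (act x v)"
    and MO: "in_Obar sm act h nn UNIV"
begin

lemma act_zero[simp]: "act x 0 = 0"
  using act_add[of x 0 0] by simp

lemma act_diff: "act x (v - w) = act x v - act x w"
  using act_add[of x "v - w" w] by (simp add: algebra_simps)

definition cpl :: "'m set \<Rightarrow> 'm set \<Rightarrow> bool" where
  "cpl X Y \<longleftrightarrow> submodule sm act X \<and> submodule sm act Y \<and> X \<inter> Y = {0}
     \<and> (\<forall>v. \<exists>a\<in>X. \<exists>b\<in>Y. v = a + b)"

lemma wp:
  assumes X: "submodule sm act X" and Y: "submodule sm act Y" and XY: "X \<inter> Y = {0}"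
    and a: "a \<in> X" and b: "b \<in> Y" and w: "\<forall>t\<in>h. act t (a + b) = sm (lam t) (a + b)"
  shows "a \<in> weight_space sm act h X lam" "b \<in> weight_space sm act h Y lam"
proof -
  have "\<forall>t\<in>h. act t a = sm (lam t) a \<and> act t b = sm (lam t) b"
  proof
    fix t assume t: "t \<in> h"
    let ?d = "act t a - sm (lam t) a"
    have dX: "?d \<in> X" using X a unfolding submodule_def
      by (simp add: subspace_diff subspace_scale)
    have e: "act t a + act t b = sm (lam t) a + sm (lam t) b"
      using w t by (simp add: act_add scale_right_distrib)
    have "?d = sm (lam t) b - act t b" using e by (simp add: algebra_simps)
    then have dY: "?d \<in> Y" using Y b unfolding submodule_def
      by (simp add: subspace_diff subspace_scale)
    have "?d = 0" using dX dY XY by blast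
    then show "act t a = sm (lam t) a \<and> act t b = sm (lam t) b" using e by simp
  qed
  then show "a \<in> weight_space sm act h X lam" "b \<in> weight_space sm act h Y lam"
    using a b unfolding weight_space_def by auto
qed

lemma ws_subspace:
  assumes "subspace X" shows "subspace (weight_space sm act h X lam)"
proof -
  have X: "0 \<in> X" "\<forall>x\<in>X. \<forall>y\<in>X. x + y \<in> X" "\<forall>c. \<forall>x\<in>X. sm c x \<in> X"
    using assms unfolding subspace_def by auto
  show ?thesis unfolding subspace_def weight_space_def
    using X by (auto simp: act_add act_sm scale_right_distrib scale_left_commute)
qed

lemma fin_dim_sub:
  assumes "fin_dim sm V" "subspace U" "U \<subseteq> V"
  shows "fin_dim sm U"
proof -
  obtain W where W: "finite W" "W \<subseteq> V" "span W = V" using assms(1) unfolding fin_dim_def by auto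
  obtain B where B: "B \<subseteq> U" "independent B" "U \<subseteq> span B" "card B = dim U" by (rule basis_exists)
  have "finite B" using independent_span_bound[OF W(1) B(2)] B(1) assms(3) W(3) by auto
  moreover have "span B = U" using span_subspace[OF B(1) B(3) assms(2)] .
  ultimately show ?thesis using B unfolding fin_dim_def by auto
qed

lemma stab:
  assumes W: "finite W" and ne: "K \<noteq> {}" and sub: "\<forall>X\<in>K. subspace X \<and> X \<subseteq> span W"
    and ch: "\<forall>X\<in>K. \<forall>Y\<in>K. X \<subseteq> Y \<or> Y \<subseteq> X"
  shows "\<exists>X\<in>K. \<forall>Y\<in>K. X \<subseteq> Y"
proof -
  obtain X where X: "X \<in> K" and mn: "\<forall>Y\<in>K. dim X \<le> dim Y"
    using ex_has_least_nat[of "\<lambda>X. X \<in> K" _ dim] ne by blast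
  have "X \<subseteq> Y" if Y: "Y \<in> K" for Y
  proof (rule ccontr)
    assume nxy: "\<not> X \<subseteq> Y"
    then have YX: "Y \<subseteq> X" using ch X Y by blast
    obtain x where x: "x \<in> X" "x \<notin> Y" using nxy by blast
    obtain B' where B': "B' \<subseteq> Y" "independent B'" "Y \<subseteq> span B'" "card B' = dim Y"
      by (rule basis_exists)
    obtain B where B: "B \<subseteq> X" "independent B" "X \<subseteq> span B" "card B = dim X"
      by (rule basis_exists)
    have fB': "finite B'" using independent_span_bound[OF W B'(2)] B'(1) Y sub by blast
    have fB: "finite B" using independent_span_bound[OF W B(2)] B(1) X sub by blast
    have "span B' \<subseteq> Y" using span_minimal[OF B'(1)] sub Y by blast
    then have xs: "x \<notin> span B'" using x by blast
    have ind: "independent (insert x B')" using independent_insertI[OF xs B'(2)] .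
    have "insert x B' \<subseteq> span B" using B(3) x(1) B'(1) YX by blast
    then have "card (insert x B') \<le> card B" using independent_span_bound[OF fB ind] by blast
    moreover have "card (insert x B') = Suc (card B')" using fB' xs span_base[of x B'] by (metis card_insert_disjoint)
    ultimately have "dim Y < dim X" using B B' by simp
    then show False using mn Y by fastforce
  qed
  then show ?thesis using X by blast
qed

lemma cpl_sym: "cpl X Y \<Longrightarrow> cpl Y X"
  unfolding cpl_def by (metis add.commute inf_commute)

lemma sub_subspace: "submodule sm act X \<Longrightarrow> subspace X"
  unfolding submodule_def by simp

lemma sub_act: "submodule sm act X \<Longrightarrow> v \<in> X \<Longrightarrow> act x v \<in> X"
  unfolding submodule_def by simp

lemma sums_submodule:
  assumes X: "submodule sm act X" and Y: "submodule sm act Y"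
  shows "submodule sm act {a + b |a b. a \<in> X \<and> b \<in> Y}"
proof -
  have "subspace {a + b |a b. a \<in> X \<and> b \<in> Y}"
    using assms by (simp add: submodule_def subspace_sums)
  moreover have "act x v \<in> {a + b |a b. a \<in> X \<and> b \<in> Y}"
    if v: "v \<in> {a + b |a b. a \<in> X \<and> b \<in> Y}" for x v
  proof -
    obtain a b where ab: "a \<in> X" "b \<in> Y" "v = a + b" using v by blast
    have "act x a \<in> X" "act x b \<in> Y" using ab X Y by (auto simp: submodule_def)
    then show ?thesis unfolding ab(3) act_add by blast
  qed
  ultimately show ?thesis unfolding submodule_def by blast
qed

lemma F1:
  assumes c: "cpl X Y"
  shows "in_Obar sm act h nn X"
proof -
  have X: "submodule sm act X" and Y: "submodule sm act Y" and XY: "X \<inter> Y = {0}"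
    and cov: "\<forall>v. \<exists>a\<in>X. \<exists>b\<in>Y. v = a + b" using c unfolding cpl_def by auto
  let ?S = "span (\<Union>lam. weight_space sm act h X lam)"
  let ?T = "{a + b |a b. a \<in> ?S \<and> b \<in> Y}"
  have sT: "subspace ?T" using subspace_sums[OF subspace_span sub_subspace[OF Y]] .
  have gen: "(\<Union>lam. weight_space sm act h UNIV lam) \<subseteq> ?T"
  proof
    fix w assume "w \<in> (\<Union>lam. weight_space sm act h UNIV lam)"
    then obtain lam where w: "w \<in> weight_space sm act h UNIV lam" by blast
    obtain a b where ab: "a \<in> X" "b \<in> Y" "w = a + b" using cov by blast
    have "a \<in> weight_space sm act h X lam"
      using wp(1)[OF X Y XY ab(1,2)] w ab(3) unfolding weight_space_def by auto
    then have "a \<in> ?S" by (auto intro: span_base)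
    then show "w \<in> ?T" using ab by blast
  qed
  have MS: "UNIV \<subseteq> span (\<Union>lam. weight_space sm act h UNIV lam)"
    using MO unfolding in_Obar_def by simp
  have UT: "UNIV \<subseteq> ?T" using MS span_minimal[OF gen sT] by blast
  have SX: "?S \<subseteq> X"
    by (rule span_minimal) (auto simp: weight_space_def sub_subspace[OF X])
  have wX: "X \<subseteq> ?S"
  proof
    fix v assume v: "v \<in> X"
    obtain a b where ab: "a \<in> ?S" "b \<in> Y" "v = a + b" using UT by blast
    have "b = v - a" using ab by simp
    then have "b \<in> X" using v SX ab(1) sub_subspace[OF X] by (simp add: subspace_diff subset_iff)
    then have "b = 0" using ab(2) XY by blast
    then show "v \<in> ?S" using ab by simp
  qed
  have fd: "fin_dim sm (weight_space sm act h X lam)" for lam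
  proof -
    have "fin_dim sm (weight_space sm act h UNIV lam)" using MO unfolding in_Obar_def by simp
    moreover have "weight_space sm act h X lam \<subseteq> weight_space sm act h UNIV lam"
      unfolding weight_space_def by auto
    ultimately show ?thesis using fin_dim_sub ws_subspace[OF sub_subspace[OF X]] by blast
  qed
  show ?thesis using X wX fd MO unfolding in_Obar_def by auto
qed

lemma subspace_chain_Union:
  assumes ne: "K \<noteq> {}" and sK: "\<forall>X\<in>K. subspace X" and ch: "\<forall>X\<in>K. \<forall>Y\<in>K. X \<subseteq> Y \<or> Y \<subseteq> X"
  shows "subspace (\<Union>K)"
  unfolding subspace_def
proof (intro conjI ballI allI)
  obtain X where X: "X \<in> K" using ne by blast
  then have "0 \<in> X" using sK by (simp add: subspace_0)
  then show "0 \<in> \<Union>K" using X by (rule UnionI[rotated])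
next
  fix x y assume "x \<in> \<Union>K" "y \<in> \<Union>K"
  then obtain X Y where XY: "X \<in> K" "Y \<in> K" "x \<in> X" "y \<in> Y" by blast
  show "x + y \<in> \<Union>K"
  proof (cases "X \<subseteq> Y")
    case True
    then have "x + y \<in> Y" using XY sK by (simp add: subspace_add subset_iff)
    then show ?thesis using XY(2) by (rule UnionI[rotated])
  next
    case False
    then have "Y \<subseteq> X" using ch XY by blast
    then have "x + y \<in> X" using XY sK by (simp add: subspace_add subset_iff)
    then show ?thesis using XY(1) by (rule UnionI[rotated])
  qed
next
  fix c x assume "x \<in> \<Union>K"
  then obtain X where X: "X \<in> K" "x \<in> X" by blast
  then have "sm c x \<in> X" using sK by (simp add: subspace_scale)
  then show "sm c x \<in> \<Union>K" using X(1) by (rule UnionI[rotated])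
qed

lemma chain_lim:
  assumes ne: "C \<noteq> {}" and cp: "\<forall>p\<in>C. cpl (fst p) (snd p)"
    and ch: "\<forall>p\<in>C. \<forall>q\<in>C. (fst p \<subseteq> fst q \<and> snd q \<subseteq> snd p) \<or> (fst q \<subseteq> fst p \<and> snd p \<subseteq> snd q)"
  shows "cpl (\<Union>p\<in>C. fst p) (\<Inter>p\<in>C. snd p)"
proof -
  have sU: "subspace (\<Union>(fst ` C))"
  proof (rule subspace_chain_Union)
    show "fst ` C \<noteq> {}" using ne by simp
    show "\<forall>X\<in>fst ` C. subspace X" using cp by (auto simp: cpl_def submodule_def)
    show "\<forall>X\<in>fst ` C. \<forall>Y\<in>fst ` C. X \<subseteq> Y \<or> Y \<subseteq> X"
    proof (intro ballI)
      fix X Y assume "X \<in> fst ` C" "Y \<in> fst ` C"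
      then obtain p q where pq: "p \<in> C" "q \<in> C" "X = fst p" "Y = fst q" by blast
      show "X \<subseteq> Y \<or> Y \<subseteq> X" using ch[rule_format, OF pq(1,2)] pq(3,4) by blast
    qed
  qed
  have subU: "submodule sm act (\<Union>p\<in>C. fst p)"
    unfolding submodule_def
  proof (intro conjI allI ballI)
    show "subspace (\<Union>p\<in>C. fst p)" using sU .
    fix x v assume "v \<in> (\<Union>p\<in>C. fst p)"
    then obtain p where p: "p \<in> C" "v \<in> fst p" by blast
    have "submodule sm act (fst p)" using cp p(1) unfolding cpl_def by blast
    then have "act x v \<in> fst p" using p(2) by (rule sub_act)
    then show "act x v \<in> (\<Union>p\<in>C. fst p)" using p(1) by blast
  qed
  have sn: "submodule sm act (snd p)" if "p \<in> C" for p using cp that unfolding cpl_def by blast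
  have subI: "submodule sm act (\<Inter>p\<in>C. snd p)"
    unfolding submodule_def subspace_def
  proof (intro conjI allI ballI)
    show "0 \<in> (\<Inter>p\<in>C. snd p)"
    proof (rule INT_I)
      fix p assume "p \<in> C" then show "0 \<in> snd p" by (rule subspace_0[OF sub_subspace[OF sn]])
    qed
    show "x + y \<in> (\<Inter>p\<in>C. snd p)" if xy: "x \<in> (\<Inter>p\<in>C. snd p)" "y \<in> (\<Inter>p\<in>C. snd p)" for x y
    proof (rule INT_I)
      fix p assume p: "p \<in> C"
      have "x \<in> snd p" "y \<in> snd p" using xy p by auto
      then show "x + y \<in> snd p" by (rule subspace_add[OF sub_subspace[OF sn[OF p]]])
    qed
    show "sm c x \<in> (\<Inter>p\<in>C. snd p)" if x: "x \<in> (\<Inter>p\<in>C. snd p)" for c x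
    proof (rule INT_I)
      fix p assume p: "p \<in> C"
      have "x \<in> snd p" using x p by auto
      then show "sm c x \<in> snd p" by (rule subspace_scale[OF sub_subspace[OF sn[OF p]]])
    qed
    show "act x v \<in> (\<Inter>p\<in>C. snd p)" if v: "v \<in> (\<Inter>p\<in>C. snd p)" for x v
    proof (rule INT_I)
      fix p assume p: "p \<in> C"
      have "v \<in> snd p" using v p by auto
      then show "act x v \<in> snd p" by (rule sub_act[OF sn[OF p]])
    qed
  qed
  have int: "(\<Union>p\<in>C. fst p) \<inter> (\<Inter>p\<in>C. snd p) = {0}"
  proof
    show "(\<Union>p\<in>C. fst p) \<inter> (\<Inter>p\<in>C. snd p) \<subseteq> {0}"
    proof
      fix x assume x: "x \<in> (\<Union>p\<in>C. fst p) \<inter> (\<Inter>p\<in>C. snd p)"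
      then obtain p where p: "p \<in> C" "x \<in> fst p" by blast
      have "x \<in> snd p" using x p(1) by blast
      moreover have "fst p \<inter> snd p = {0}" using cp p(1) unfolding cpl_def by blast
      ultimately show "x \<in> {0}" using p(2) by blast
    qed
    have "0 \<in> (\<Union>p\<in>C. fst p)" by (rule subspace_0[OF sub_subspace[OF subU]])
    moreover have "0 \<in> (\<Inter>p\<in>C. snd p)" by (rule subspace_0[OF sub_subspace[OF subI]])
    ultimately show "{0} \<subseteq> (\<Union>p\<in>C. fst p) \<inter> (\<Inter>p\<in>C. snd p)" by blast
  qed
  let ?T = "{a + b |a b. a \<in> (\<Union>p\<in>C. fst p) \<and> b \<in> (\<Inter>p\<in>C. snd p)}"
  have sT: "subspace ?T" using subspace_sums[OF sU sub_subspace[OF subI]] .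
  have gen: "(\<Union>lam. weight_space sm act h UNIV lam) \<subseteq> ?T"
  proof
    fix w assume "w \<in> (\<Union>lam. weight_space sm act h UNIV lam)"
    then obtain mu where w: "w \<in> weight_space sm act h UNIV mu" by blast
    have "fin_dim sm (weight_space sm act h UNIV mu)" using MO unfolding in_Obar_def by simp
    then obtain Wf where Wf: "finite Wf" "span Wf = weight_space sm act h UNIV mu"
      unfolding fin_dim_def by blast
    let ?K = "(\<lambda>p. weight_space sm act h (snd p) mu) ` C"
    have "\<exists>X\<in>?K. \<forall>Y\<in>?K. X \<subseteq> Y"
    proof (rule stab[OF Wf(1)])
      show "?K \<noteq> {}" using ne by simp
      show "\<forall>X\<in>?K. subspace X \<and> X \<subseteq> span Wf"
      proof
        fix X assume "X \<in> ?K"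
        then obtain p where p: "p \<in> C" "X = weight_space sm act h (snd p) mu" by blast
        have "subspace X" using p ws_subspace[OF sub_subspace[OF sn[OF p(1)]]] by simp
        moreover have "X \<subseteq> span Wf" using p Wf(2) unfolding weight_space_def by auto
        ultimately show "subspace X \<and> X \<subseteq> span Wf" by blast
      qed
      show "\<forall>X\<in>?K. \<forall>Y\<in>?K. X \<subseteq> Y \<or> Y \<subseteq> X"
      proof (intro ballI)
        fix X Y assume "X \<in> ?K" "Y \<in> ?K"
        then obtain p q where pq: "p \<in> C" "q \<in> C" "X = weight_space sm act h (snd p) mu"
          "Y = weight_space sm act h (snd q) mu" by blast
        have "snd p \<subseteq> snd q \<or> snd q \<subseteq> snd p" using ch[rule_format, OF pq(1,2)] by blast
        then show "X \<subseteq> Y \<or> Y \<subseteq> X" unfolding pq(3,4) weight_space_def by blast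
      qed
    qed
    then obtain p0 where p0: "p0 \<in> C"
      and mn: "\<forall>q\<in>C. weight_space sm act h (snd p0) mu \<subseteq> weight_space sm act h (snd q) mu" by auto
    have c0: "cpl (fst p0) (snd p0)" using cp p0 by blast
    then obtain a b where ab: "a \<in> fst p0" "b \<in> snd p0" "w = a + b" unfolding cpl_def by blast
    have "b \<in> weight_space sm act h (snd p0) mu"
      using wp(2)[of "fst p0" "snd p0" a b mu] c0 ab w unfolding cpl_def weight_space_def by auto
    then have "b \<in> (\<Inter>p\<in>C. snd p)" using mn unfolding weight_space_def by blast
    then show "w \<in> ?T" using ab p0 by blast
  qed
  have MS: "UNIV \<subseteq> span (\<Union>lam. weight_space sm act h UNIV lam)"
    using MO unfolding in_Obar_def by simp
  have UT: "UNIV \<subseteq> ?T" using MS span_minimal[OF gen sT] by blast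
  have cov: "\<forall>v. \<exists>a\<in>(\<Union>p\<in>C. fst p). \<exists>b\<in>(\<Inter>p\<in>C. snd p). v = a + b"
  proof
    fix v
    have "v \<in> ?T" using UT by blast
    then obtain a b where "a \<in> (\<Union>p\<in>C. fst p)" "b \<in> (\<Inter>p\<in>C. snd p)" "v = a + b" by blast
    then show "\<exists>a\<in>(\<Union>p\<in>C. fst p). \<exists>b\<in>(\<Inter>p\<in>C. snd p). v = a + b" by blast
  qed
  show ?thesis unfolding cpl_def using subU subI int cov by (intro conjI)
qed

lemma enc_le: "(Inl ` A \<union> Inr ` B \<subseteq> Inl ` A' \<union> Inr ` B') \<longleftrightarrow> (A \<subseteq> A' \<and> B \<subseteq> B')"
proof
  assume H: "Inl ` A \<union> Inr ` B \<subseteq> Inl ` A' \<union> Inr ` B'"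
  have "x \<in> A'" if "x \<in> A" for x
  proof -
    have "Inl x \<in> Inl ` A' \<union> Inr ` B'" using H that by blast
    then show ?thesis by auto
  qed
  moreover have "x \<in> B'" if "x \<in> B" for x
  proof -
    have "Inr x \<in> Inl ` A' \<union> Inr ` B'" using H that by blast
    then show ?thesis by auto
  qed
  ultimately show "A \<subseteq> A' \<and> B \<subseteq> B'" by blast
next
  assume "A \<subseteq> A' \<and> B \<subseteq> B'"
  then show "Inl ` A \<union> Inr ` B \<subseteq> Inl ` A' \<union> Inr ` B'" by blast
qed

lemma pair_zorn:
  fixes A :: "('a set \<times> 'b set) set"
  assumes ne: "A \<noteq> {}"
    and ub: "\<And>C. C \<subseteq> A \<Longrightarrow> C \<noteq> {} \<Longrightarrow>
      (\<forall>p\<in>C. \<forall>q\<in>C. (fst p \<subseteq> fst q \<and> snd q \<subseteq> snd p) \<or> (fst q \<subseteq> fst p \<and> snd p \<subseteq> snd q)) \<Longrightarrow>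
      \<exists>u\<in>A. \<forall>p\<in>C. fst p \<subseteq> fst u \<and> snd u \<subseteq> snd p"
  shows "\<exists>m\<in>A. \<forall>p\<in>A. fst m \<subseteq> fst p \<and> snd p \<subseteq> snd m \<longrightarrow> p = m"
proof -
  define enc :: "'a set \<times> 'b set \<Rightarrow> ('a + 'b) set" where
    "enc p = Inl ` fst p \<union> Inr ` (- snd p)" for p
  have le: "enc p \<subseteq> enc q \<longleftrightarrow> fst p \<subseteq> fst q \<and> snd q \<subseteq> snd p" for p q
    unfolding enc_def enc_le by auto
  have eq: "enc p = enc q \<Longrightarrow> p = q" for p q
    using le[of p q] le[of q p] by (auto simp: prod_eq_iff)
  have "\<forall>Ch\<in>chains (enc ` A). \<exists>U\<in>enc ` A. \<forall>X\<in>Ch. X \<subseteq> U"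
  proof
    fix Ch assume Ch: "Ch \<in> chains (enc ` A)"
    show "\<exists>U\<in>enc ` A. \<forall>X\<in>Ch. X \<subseteq> U"
    proof (cases "Ch = {}")
      case True then show ?thesis using ne by auto
    next
      case False
      let ?C = "{p\<in>A. enc p \<in> Ch}"
      have CA: "?C \<subseteq> A" by blast
      have Cne: "?C \<noteq> {}" using False Ch unfolding chains_def by auto
      have cch: "\<forall>p\<in>?C. \<forall>q\<in>?C. (fst p \<subseteq> fst q \<and> snd q \<subseteq> snd p) \<or> (fst q \<subseteq> fst p \<and> snd p \<subseteq> snd q)"
        using Ch unfolding chains_def chain_subset_def le[symmetric] by blast
      obtain u where u: "u \<in> A" "\<forall>p\<in>?C. fst p \<subseteq> fst u \<and> snd u \<subseteq> snd p"
        using ub[OF CA Cne cch] by blast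
      have "\<forall>X\<in>Ch. X \<subseteq> enc u"
      proof
        fix X assume "X \<in> Ch"
        then obtain p where "p \<in> A" "X = enc p" using Ch unfolding chains_def by blast
        moreover have "p \<in> ?C" using calculation \<open>X \<in> Ch\<close> by blast
        ultimately show "X \<subseteq> enc u" using u(2) le by blast
      qed
      then show ?thesis using u(1) by blast
    qed
  qed
  from Zorn_Lemma2[OF this] obtain M where M: "M \<in> enc ` A" "\<forall>X\<in>enc ` A. M \<subseteq> X \<longrightarrow> X = M"
    by blast
  then obtain m where m: "m \<in> A" "M = enc m" by blast
  show ?thesis
  proof (intro bexI[OF _ m(1)] ballI impI)
    fix p assume pA: "p \<in> A" and pm: "fst m \<subseteq> fst p \<and> snd p \<subseteq> snd m"
    have "enc m \<subseteq> enc p" using pm by (simp add: le)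
    moreover have "enc p \<in> enc ` A" using pA by (rule imageI)
    ultimately have "enc p = enc m" using M(2) m(2) by blast
    then show "p = m" by (rule eq)
  qed
qed

lemma cpl_split:
  assumes c: "cpl D E" and A: "submodule sm act A" and B: "submodule sm act B"
    and AB: "A \<inter> B = {0}" and D: "D = {a + b |a b. a \<in> A \<and> b \<in> B}"
  shows "cpl A {b + e |b e. b \<in> B \<and> e \<in> E}"
proof -
  have Dsub: "submodule sm act D" and Esub: "submodule sm act E" and DE: "D \<inter> E = {0}"
    and cov: "\<forall>v. \<exists>a\<in>D. \<exists>b\<in>E. v = a + b" using c unfolding cpl_def by auto
  have A0: "0 \<in> A" and B0: "0 \<in> B" using A B sub_subspace subspace_0 by blast+
  have AD: "A \<subseteq> D" using D B0 by force
  have BD: "B \<subseteq> D" using D A0 by force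
  have s: "submodule sm act {b + e |b e. b \<in> B \<and> e \<in> E}" using sums_submodule[OF B Esub] .
  have i: "A \<inter> {b + e |b e. b \<in> B \<and> e \<in> E} \<subseteq> {0}"
  proof
    fix x assume "x \<in> A \<inter> {b + e |b e. b \<in> B \<and> e \<in> E}"
    then obtain b e where x: "x \<in> A" "b \<in> B" "e \<in> E" "x = b + e" by blast
    have "e = x - b" using x by simp
    moreover have "x - b \<in> D" using x AD BD subspace_diff[OF sub_subspace[OF Dsub]] by blast
    ultimately have "e = 0" using x(3) DE by blast
    then have "x = b" using x by simp
    then show "x \<in> {0}" using x AB by blast
  qed
  have i2: "A \<inter> {b + e |b e. b \<in> B \<and> e \<in> E} = {0}"
    using i A0 B0 sub_subspace[OF Esub] subspace_0 by force
  have cv: "\<forall>v. \<exists>a\<in>A. \<exists>y\<in>{b + e |b e. b \<in> B \<and> e \<in> E}. v = a + y"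
  proof
    fix v
    obtain d e where de: "d \<in> D" "e \<in> E" "v = d + e" using cov by blast
    obtain a b where ab: "a \<in> A" "b \<in> B" "d = a + b" using de D by blast
    have "v = a + (b + e)" using de ab by (simp add: add.assoc)
    then show "\<exists>a\<in>A. \<exists>y\<in>{b + e |b e. b \<in> B \<and> e \<in> E}. v = a + y" using ab de by blast
  qed
  show ?thesis using A s i2 cv unfolding cpl_def by blast
qed

lemma exists_indec:
  assumes cY: "cpl Cc Y" and w0: "w0 \<in> weight_space sm act h Cc lam" "w0 \<noteq> 0"
  shows "\<exists>D E. cpl D E \<and> D \<subseteq> Cc \<and> indecomposable_Obar sm act h nn D"
proof -
  define A where "A = {p. cpl (snd p) (fst p) \<and> snd p \<subseteq> Cc
      \<and> (\<exists>w\<in>weight_space sm act h (snd p) lam. w \<noteq> 0)}"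
  have YC: "(Y, Cc) \<in> A" using cY w0 unfolding A_def by auto
  have "\<exists>m\<in>A. \<forall>p\<in>A. fst m \<subseteq> fst p \<and> snd p \<subseteq> snd m \<longrightarrow> p = m"
  proof (rule pair_zorn)
    show "A \<noteq> {}" using YC by blast
  next
    fix C assume CA: "C \<subseteq> A" and ne: "C \<noteq> {}"
      and ch: "\<forall>p\<in>C. \<forall>q\<in>C. (fst p \<subseteq> fst q \<and> snd q \<subseteq> snd p) \<or> (fst q \<subseteq> fst p \<and> snd p \<subseteq> snd q)"
    let ?u = "(\<Union>p\<in>C. fst p, \<Inter>p\<in>C. snd p)"
    have "\<forall>p\<in>C. cpl (fst p) (snd p)"
    proof
      fix p assume "p \<in> C"
      then have "cpl (snd p) (fst p)" using CA unfolding A_def by blast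
      then show "cpl (fst p) (snd p)" by (rule cpl_sym)
    qed
    then have c1: "cpl (\<Union>p\<in>C. fst p) (\<Inter>p\<in>C. snd p)"
      using chain_lim[OF ne _ ch] by blast
    have c2: "(\<Inter>p\<in>C. snd p) \<subseteq> Cc" using CA ne unfolding A_def by blast
    have "fin_dim sm (weight_space sm act h UNIV lam)" using MO unfolding in_Obar_def by simp
    then obtain Wf where Wf: "finite Wf" "span Wf = weight_space sm act h UNIV lam"
      unfolding fin_dim_def by blast
    let ?K = "(\<lambda>p. weight_space sm act h (snd p) lam) ` C"
    have "\<exists>X\<in>?K. \<forall>Z\<in>?K. X \<subseteq> Z"
    proof (rule stab[OF Wf(1)])
      show "?K \<noteq> {}" using ne by simp
      show "\<forall>X\<in>?K. subspace X \<and> X \<subseteq> span Wf"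
      proof
        fix X assume "X \<in> ?K"
        then obtain p where p: "p \<in> C" "X = weight_space sm act h (snd p) lam" by blast
        have "subspace (snd p)" using CA p unfolding A_def cpl_def submodule_def by blast
        then have "subspace X" using p ws_subspace by simp
        moreover have "X \<subseteq> span Wf" using p Wf(2) unfolding weight_space_def by auto
        ultimately show "subspace X \<and> X \<subseteq> span Wf" by blast
      qed
      show "\<forall>X\<in>?K. \<forall>Z\<in>?K. X \<subseteq> Z \<or> Z \<subseteq> X"
      proof (intro ballI)
        fix X Y assume "X \<in> ?K" "Y \<in> ?K"
        then obtain p q where pq: "p \<in> C" "q \<in> C" "X = weight_space sm act h (snd p) lam"
          "Y = weight_space sm act h (snd q) lam" by blast
        have "snd p \<subseteq> snd q \<or> snd q \<subseteq> snd p" using ch[rule_format, OF pq(1,2)] by blast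
        then show "X \<subseteq> Y \<or> Y \<subseteq> X" unfolding pq(3,4) weight_space_def by blast
      qed
    qed
    then obtain p0 where p0: "p0 \<in> C"
      and mn: "\<forall>q\<in>C. weight_space sm act h (snd p0) lam \<subseteq> weight_space sm act h (snd q) lam" by auto
    obtain w where w: "w \<in> weight_space sm act h (snd p0) lam" "w \<noteq> 0"
      using p0 CA unfolding A_def by blast
    have "w \<in> weight_space sm act h (\<Inter>p\<in>C. snd p) lam"
      using mn w(1) unfolding weight_space_def by blast
    then have "?u \<in> A" using c1 c2 w(2) cpl_sym unfolding A_def by auto
    then show "\<exists>u\<in>A. \<forall>p\<in>C. fst p \<subseteq> fst u \<and> snd u \<subseteq> snd p" by force
  qed
  then obtain m where mA: "m \<in> A" and mx: "\<forall>p\<in>A. fst m \<subseteq> fst p \<and> snd p \<subseteq> snd m \<longrightarrow> p = m"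
    by blast
  obtain E D where m: "m = (E, D)" by (cases m)
  have cDE: "cpl D E" and DC: "D \<subseteq> Cc" and wD: "\<exists>w\<in>weight_space sm act h D lam. w \<noteq> 0"
    using mA m unfolding A_def by auto
  have Dsub: "submodule sm act D" using cDE unfolding cpl_def by blast
  have ob: "in_Obar sm act h nn D" using F1[OF cDE] .
  have nz: "D \<noteq> {0}" using wD unfolding weight_space_def by auto
  have dec: "A' = {0} \<or> B' = {0}"
    if A': "in_Obar sm act h nn A'" and B': "in_Obar sm act h nn B'" and "A' \<subseteq> D" "B' \<subseteq> D"
      and Deq: "D = {a + b |a b. a \<in> A' \<and> b \<in> B'}" and AB: "A' \<inter> B' = {0}" for A' B'
  proof -
    have As: "submodule sm act A'" and Bs: "submodule sm act B'"
      using A' B' unfolding in_Obar_def by auto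
    obtain w where w: "w \<in> weight_space sm act h D lam" "w \<noteq> 0" using wD by blast
    obtain a b where ab: "a \<in> A'" "b \<in> B'" "w = a + b" using w(1) Deq unfolding weight_space_def by blast
    have wa: "a \<in> weight_space sm act h A' lam" and wb: "b \<in> weight_space sm act h B' lam"
      using wp[OF As Bs AB ab(1,2)] w(1) ab(3) unfolding weight_space_def by auto
    have Deq': "D = {b + a |b a. b \<in> B' \<and> a \<in> A'}"
    proof -
      have "{a + b |a b. a \<in> A' \<and> b \<in> B'} = {b + a |b a. b \<in> B' \<and> a \<in> A'}"
        by (auto; metis add.commute)
      then show ?thesis using Deq by simp
    qed
    have AB': "B' \<inter> A' = {0}" using AB by blast
    show ?thesis
    proof (cases "a = 0")
      case False
      let ?p = "({b + e |b e. b \<in> B' \<and> e \<in> E}, A')"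
      have c: "cpl A' {b + e |b e. b \<in> B' \<and> e \<in> E}" using cpl_split[OF cDE As Bs AB Deq] .
      have "?p \<in> A" using c \<open>A' \<subseteq> D\<close> DC wa False unfolding A_def by auto
      moreover have "E \<subseteq> {b + e |b e. b \<in> B' \<and> e \<in> E}"
        using Bs sub_subspace subspace_0 by force
      ultimately have "?p = m" using mx m \<open>A' \<subseteq> D\<close> by auto
      then have "A' = D" using m by simp
      then have "B' = {0}" using \<open>B' \<subseteq> D\<close> AB by blast
      then show ?thesis by blast
    next
      case True
      then have b0: "b \<noteq> 0" using w ab by simp
      let ?p = "({a + e |a e. a \<in> A' \<and> e \<in> E}, B')"
      have c: "cpl B' {a + e |a e. a \<in> A' \<and> e \<in> E}" using cpl_split[OF cDE Bs As AB' Deq'] .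
      have "?p \<in> A" using c \<open>B' \<subseteq> D\<close> DC wb b0 unfolding A_def by auto
      moreover have "E \<subseteq> {a + e |a e. a \<in> A' \<and> e \<in> E}"
        using As sub_subspace subspace_0 by force
      ultimately have "?p = m" using mx m \<open>B' \<subseteq> D\<close> by auto
      then have "B' = D" using m by simp
      then have "A' = {0}" using \<open>A' \<subseteq> D\<close> AB by blast
      then show ?thesis by blast
    qed
  qed
  have "indecomposable_Obar sm act h nn D"
    unfolding indecomposable_Obar_def using ob nz dec by blast
  then show ?thesis using cDE DC by blast
qed

lemma finite_chain_sub:
  assumes "finite F" "F \<subseteq> \<Union>(g ` Ch)" "Ch \<noteq> {}"
    and ch: "\<forall>p\<in>Ch. \<forall>q\<in>Ch. g p \<subseteq> g q \<or> g q \<subseteq> g p"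
  shows "\<exists>p\<in>Ch. F \<subseteq> g p"
  using assms(1,2)
proof (induction F rule: finite_induct)
  case empty then show ?case using assms(3) by blast
next
  case (insert x F)
  then obtain p where p: "p \<in> Ch" "F \<subseteq> g p" by blast
  obtain q where q: "q \<in> Ch" "x \<in> g q" using insert.prems by blast
  show ?case
  proof (cases "g p \<subseteq> g q")
    case True then show ?thesis using p q by blast
  next
    case False then have "g q \<subseteq> g p" using ch p q by blast
    then show ?thesis using p q by blast
  qed
qed

lemma span_submodule:
  assumes "\<forall>X\<in>XX. submodule sm act X"
  shows "submodule sm act (span (\<Union>XX))"
proof -
  have "act x v \<in> span (\<Union>XX)" if v: "v \<in> span (\<Union>XX)" for x v
  proof -
    have "subspace {v. act x v \<in> span (\<Union>XX)}"
      unfolding subspace_def by (auto simp: act_add act_sm span_zero span_add span_scale)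
    moreover have "\<Union>XX \<subseteq> {v. act x v \<in> span (\<Union>XX)}"
    proof
      fix v assume "v \<in> \<Union>XX"
      then obtain X where X: "X \<in> XX" "v \<in> X" by blast
      then have "act x v \<in> \<Union>XX" using assms unfolding submodule_def by blast
      then show "v \<in> {v. act x v \<in> span (\<Union>XX)}" by (simp add: span_base)
    qed
    ultimately show ?thesis using span_minimal v by blast
  qed
  then show ?thesis unfolding submodule_def by auto
qed

lemma main_loc:
  "\<exists>Ns. (\<forall>N\<in>Ns. indecomposable_Obar sm act h nn N) \<and> internal_dsum sm UNIV Ns"
proof -
  define indep where "indep Ns \<longleftrightarrow> (\<forall>F f. finite F \<and> F \<subseteq> Ns \<and> (\<forall>N\<in>F. f N \<in> N) \<and> (\<Sum>N\<in>F. f N) = 0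
              \<longrightarrow> (\<forall>N\<in>F. f N = 0))" for Ns :: "'m set set"
  define A where "A = {p. (\<forall>N\<in>fst p. indecomposable_Obar sm act h nn N) \<and> indep (fst p)
      \<and> cpl (span (\<Union>(fst p))) (snd p)}"
  have sub_ind: "submodule sm act N" if "indecomposable_Obar sm act h nn N" for N
    using that unfolding indecomposable_Obar_def in_Obar_def by blast
  have e: "({}, UNIV) \<in> A"
  proof -
    have "cpl {0} UNIV" unfolding cpl_def submodule_def subspace_def by auto
    then show ?thesis unfolding A_def indep_def by auto
  qed
  have "\<exists>m\<in>A. \<forall>p\<in>A. fst m \<subseteq> fst p \<and> snd p \<subseteq> snd m \<longrightarrow> p = m"
  proof (rule pair_zorn)
    show "A \<noteq> {}" using e by blast
  next
    fix C assume CA: "C \<subseteq> A" and ne: "C \<noteq> {}"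
      and ch: "\<forall>p\<in>C. \<forall>q\<in>C. (fst p \<subseteq> fst q \<and> snd q \<subseteq> snd p) \<or> (fst q \<subseteq> fst p \<and> snd p \<subseteq> snd q)"
    let ?u = "(\<Union>p\<in>C. fst p, \<Inter>p\<in>C. snd p)"
    have ind: "\<forall>N\<in>fst ?u. indecomposable_Obar sm act h nn N" using CA unfolding A_def by auto
    have ch1: "\<forall>p\<in>C. \<forall>q\<in>C. fst p \<subseteq> fst q \<or> fst q \<subseteq> fst p" using ch by blast
    have indep: "indep (fst ?u)"
      unfolding indep_def
    proof (intro allI impI)
      fix F f assume F: "finite F \<and> F \<subseteq> fst ?u \<and> (\<forall>N\<in>F. f N \<in> N) \<and> (\<Sum>N\<in>F. f N) = 0"
      then obtain p where p: "p \<in> C" "F \<subseteq> fst p"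
        using finite_chain_sub[of F fst C] ne ch1 by auto
      have "indep (fst p)" using p CA unfolding A_def by blast
      then show "\<forall>N\<in>F. f N = 0" using F p unfolding indep_def by blast
    qed
    let ?C' = "(\<lambda>p. (span (\<Union>(fst p)), snd p)) ` C"
    have c': "cpl (\<Union>q\<in>?C'. fst q) (\<Inter>q\<in>?C'. snd q)"
    proof (rule chain_lim)
      show "?C' \<noteq> {}" using ne by simp
      show "\<forall>q\<in>?C'. cpl (fst q) (snd q)" using CA unfolding A_def by auto
      show "\<forall>p\<in>?C'. \<forall>q\<in>?C'. (fst p \<subseteq> fst q \<and> snd q \<subseteq> snd p) \<or> (fst q \<subseteq> fst p \<and> snd p \<subseteq> snd q)"
      proof (intro ballI)
        fix p q assume "p \<in> ?C'" "q \<in> ?C'"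
        then obtain p1 q1 where pq: "p1 \<in> C" "q1 \<in> C" "p = (span (\<Union>(fst p1)), snd p1)"
          "q = (span (\<Union>(fst q1)), snd q1)" by blast
        have "(fst p1 \<subseteq> fst q1 \<and> snd q1 \<subseteq> snd p1) \<or> (fst q1 \<subseteq> fst p1 \<and> snd p1 \<subseteq> snd q1)"
          using ch pq by blast
        then show "(fst p \<subseteq> fst q \<and> snd q \<subseteq> snd p) \<or> (fst q \<subseteq> fst p \<and> snd p \<subseteq> snd q)"
        proof (elim disjE)
          assume a: "fst p1 \<subseteq> fst q1 \<and> snd q1 \<subseteq> snd p1"
          then have "span (\<Union>(fst p1)) \<subseteq> span (\<Union>(fst q1))" by (simp add: Union_mono span_mono)
          then show ?thesis using pq a by simp
        next
          assume a: "fst q1 \<subseteq> fst p1 \<and> snd p1 \<subseteq> snd q1"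
          then have "span (\<Union>(fst q1)) \<subseteq> span (\<Union>(fst p1))" by (simp add: Union_mono span_mono)
          then show ?thesis using pq a by simp
        qed
      qed
    qed
    have I: "(\<Inter>q\<in>?C'. snd q) = snd ?u" by simp
    have U: "(\<Union>q\<in>?C'. fst q) = span (\<Union>(fst ?u))"
    proof
      show "(\<Union>q\<in>?C'. fst q) \<subseteq> span (\<Union>(fst ?u))"
      proof
        fix x assume "x \<in> (\<Union>q\<in>?C'. fst q)"
        then obtain p where p: "p \<in> C" "x \<in> span (\<Union>(fst p))" by auto
        have "\<Union>(fst p) \<subseteq> \<Union>(fst ?u)" using p by auto
        then show "x \<in> span (\<Union>(fst ?u))" using p span_mono by blast
      qed
      have "subspace (\<Union>q\<in>?C'. fst q)"
      proof (rule subspace_chain_Union)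
        show "fst ` ?C' \<noteq> {}" using ne by simp
        show "\<forall>X\<in>fst ` ?C'. subspace X" by auto
        show "\<forall>X\<in>fst ` ?C'. \<forall>Y\<in>fst ` ?C'. X \<subseteq> Y \<or> Y \<subseteq> X"
        proof (intro ballI)
          fix X Y assume "X \<in> fst ` ?C'" "Y \<in> fst ` ?C'"
          then obtain p1 q1 where pq: "p1 \<in> C" "q1 \<in> C" "X = span (\<Union>(fst p1))" "Y = span (\<Union>(fst q1))"
            by auto
          then have "fst p1 \<subseteq> fst q1 \<or> fst q1 \<subseteq> fst p1" using ch1 by blast
          then show "X \<subseteq> Y \<or> Y \<subseteq> X" using pq by (metis Union_mono span_mono)
        qed
      qed
      moreover have "\<Union>(fst ?u) \<subseteq> (\<Union>q\<in>?C'. fst q)"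
      proof
        fix x assume "x \<in> \<Union>(fst ?u)"
        then obtain N p where p: "p \<in> C" "N \<in> fst p" "x \<in> N" by auto
        then have "x \<in> \<Union>(fst p)" by blast
        then have "x \<in> span (\<Union>(fst p))" by (rule span_base)
        then have x1: "x \<in> fst (span (\<Union>(fst p)), snd p)" by simp
        have "(span (\<Union>(fst p)), snd p) \<in> ?C'" using p(1) by (rule imageI)
        then show "x \<in> (\<Union>q\<in>?C'. fst q)" using x1 by (rule UN_I)
      qed
      ultimately show "span (\<Union>(fst ?u)) \<subseteq> (\<Union>q\<in>?C'. fst q)" by (rule span_minimal[rotated])
    qed
    have "?u \<in> A" using ind indep c' unfolding A_def I U by simp
    then show "\<exists>u\<in>A. \<forall>p\<in>C. fst p \<subseteq> fst u \<and> snd u \<subseteq> snd p" by force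
  qed
  then obtain m where mA: "m \<in> A" and mx: "\<forall>p\<in>A. fst m \<subseteq> fst p \<and> snd p \<subseteq> snd m \<longrightarrow> p = m"
    by blast
  obtain Ns Cc where m: "m = (Ns, Cc)" by (cases m)
  have indN: "\<forall>N\<in>Ns. indecomposable_Obar sm act h nn N" and indp: "indep Ns"
    and cS: "cpl (span (\<Union>Ns)) Cc" using mA m unfolding A_def by auto
  have Csub: "submodule sm act Cc" and SC: "span (\<Union>Ns) \<inter> Cc = {0}"
    and covS: "\<forall>v. \<exists>a\<in>span (\<Union>Ns). \<exists>b\<in>Cc. v = a + b"
    using cS unfolding cpl_def by auto
  have C0: "Cc = {0}"
  proof (rule ccontr)
    assume nz: "Cc \<noteq> {0}"
    have obC: "in_Obar sm act h nn Cc" using F1[OF cpl_sym[OF cS]] .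
    have "\<exists>lam. \<exists>w\<in>weight_space sm act h Cc lam. w \<noteq> 0"
    proof (rule ccontr)
      assume "\<not> ?thesis"
      then have "(\<Union>lam. weight_space sm act h Cc lam) \<subseteq> {0}" by auto
      then have "span (\<Union>lam. weight_space sm act h Cc lam) \<subseteq> {0}"
        using span_minimal[of _ "{0}"] subspace_single_0 by blast
      then have "Cc \<subseteq> {0}" using obC unfolding in_Obar_def by blast
      moreover have "0 \<in> Cc" using Csub sub_subspace subspace_0 by blast
      ultimately show False using nz by blast
    qed
    then obtain lam w where w: "w \<in> weight_space sm act h Cc lam" "w \<noteq> 0" by blast
    obtain D E where DE: "cpl D E" "D \<subseteq> Cc" and indD: "indecomposable_Obar sm act h nn D"
      using exists_indec[OF cpl_sym[OF cS] w] by blast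
    have Dsub: "submodule sm act D" and Esub: "submodule sm act E" and DEi: "D \<inter> E = {0}"
      and covD: "\<forall>v. \<exists>a\<in>D. \<exists>b\<in>E. v = a + b" using DE(1) unfolding cpl_def by auto
    have D0: "0 \<in> D" using Dsub sub_subspace subspace_0 by blast
    have Dnz: "D \<noteq> {0}" using indD unfolding indecomposable_Obar_def by blast
    let ?S = "span (\<Union>Ns)"
    let ?p = "(insert D Ns, Cc \<inter> E)"
    have spanU: "span (\<Union>(insert D Ns)) = {x + y |x y. x \<in> D \<and> y \<in> ?S}"
    proof -
      have sD: "span D = D" using sub_subspace[OF Dsub] by simp
      have "\<Union>(insert D Ns) = D \<union> \<Union>Ns" by simp
      then show ?thesis using span_Un[of D "\<Union>Ns"] unfolding sD by simp
    qed
    have subS': "submodule sm act (span (\<Union>(insert D Ns)))"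
      using span_submodule[of "insert D Ns"] indN Dsub sub_ind by blast
    have subCE: "submodule sm act (Cc \<inter> E)"
      using Csub Esub unfolding submodule_def subspace_def by auto
    have i1: "span (\<Union>(insert D Ns)) \<inter> (Cc \<inter> E) \<subseteq> {0}"
    proof
      fix v assume v: "v \<in> span (\<Union>(insert D Ns)) \<inter> (Cc \<inter> E)"
      then obtain d s where ds: "d \<in> D" "s \<in> ?S" "v = d + s" using spanU by blast
      have "s = v - d" using ds by simp
      moreover have "v - d \<in> Cc" using v ds(1) DE(2) subspace_diff[OF sub_subspace[OF Csub]] by blast
      ultimately have "s = 0" using ds(2) SC by blast
      then have "v = d" using ds by simp
      then show "v \<in> {0}" using v ds(1) DEi by blast
    qed
    have i2: "span (\<Union>(insert D Ns)) \<inter> (Cc \<inter> E) = {0}"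
      using i1 subS' subCE sub_subspace subspace_0 by blast
    have cv: "\<forall>v. \<exists>a\<in>span (\<Union>(insert D Ns)). \<exists>b\<in>Cc \<inter> E. v = a + b"
    proof
      fix v
      obtain s c where sc: "s \<in> ?S" "c \<in> Cc" "v = s + c" using covS by blast
      obtain d e where de: "d \<in> D" "e \<in> E" "c = d + e" using covD by blast
      have "e = c - d" using de by simp
      then have eC: "e \<in> Cc" using sc(2) de(1) DE(2) subspace_diff[OF sub_subspace[OF Csub]] by blast
      have "d + s \<in> span (\<Union>(insert D Ns))" using spanU de(1) sc(1) by blast
      moreover have "v = (d + s) + e" using sc de by (simp add: algebra_simps)
      ultimately show "\<exists>a\<in>span (\<Union>(insert D Ns)). \<exists>b\<in>Cc \<inter> E. v = a + b" using eC de(2) by blast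
    qed
    have cp: "cpl (span (\<Union>(insert D Ns))) (Cc \<inter> E)" using subS' subCE i2 cv unfolding cpl_def by blast
    have ip: "indep (insert D Ns)"
      unfolding indep_def
    proof (intro allI impI)
      fix F f assume F: "finite F \<and> F \<subseteq> insert D Ns \<and> (\<forall>N\<in>F. f N \<in> N) \<and> (\<Sum>N\<in>F. f N) = 0"
      show "\<forall>N\<in>F. f N = 0"
      proof (cases "D \<in> F")
        case False
        then have "F \<subseteq> Ns" using F by blast
        then show ?thesis using F indp unfolding indep_def by blast
      next
        case True
        let ?s = "\<Sum>N\<in>F - {D}. f N"
        have fF: "finite F" and s0F: "(\<Sum>N\<in>F. f N) = 0" using F by blast+
        have sum: "f D + ?s = 0" using sum.remove[OF fF True, of f] s0F by simp
        have sS: "?s \<in> ?S"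
          by (rule span_sum) (use F in \<open>auto intro: span_base\<close>)
        have fD: "f D \<in> Cc" using F True DE(2) by blast
        have "f D = - ?s" using sum by (simp add: eq_neg_iff_add_eq_0)
        then have "f D \<in> ?S" using sS span_neg by simp
        then have fD0: "f D = 0" using fD SC by blast
        then have s0: "?s = 0" using sum by simp
        have "F - {D} \<subseteq> Ns" using F by blast
        then have "\<forall>N\<in>F - {D}. f N = 0" using F s0 indp unfolding indep_def by (meson finite_Diff DiffD1)
        then show ?thesis using fD0 by blast
      qed
    qed
    have "?p \<in> A" using cp ip indN indD unfolding A_def by auto
    then have "?p = m" using mx m by auto
    then have "D \<in> Ns" using m by auto
    then have "D \<subseteq> ?S" by (auto intro: span_base)
    then have "D \<subseteq> {0}" using DE(2) SC by blast
    then show False using Dnz D0 by blast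
  qed
  have "span (\<Union>Ns) = UNIV" using covS C0 by auto
  then have "internal_dsum sm UNIV Ns" using indp unfolding internal_dsum_def indep_def by auto
  then show ?thesis using indN by blast
qed

end

theorem mainTheorem7:
  fixes sg :: "'k::field_char_0 \<Rightarrow> 'g::ab_group_add \<Rightarrow> 'g"
    and br :: "'g \<Rightarrow> 'g \<Rightarrow> 'g"
    and gs :: "nat \<Rightarrow> 'g set"
    and h :: "'g set"
    and P :: "('g \<Rightarrow> 'k) set"
    and sm :: "'k \<Rightarrow> 'm::ab_group_add \<Rightarrow> 'm"
    and act :: "'g \<Rightarrow> 'm \<Rightarrow> 'm"
  assumes "alg_closed TYPE('k)"
    and "root_reductive_setup sg br gs h P"
    and "g_module sg br sm act"
    and "in_Obar sm act h (nil_part sg br h P) UNIV"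
  shows "\<exists>Ns. (\<forall>N\<in>Ns. indecomposable_Obar sm act h (nil_part sg br h P) N)
              \<and> internal_dsum sm UNIV Ns"
proof -
  have vs: "vector_space sm" and aa: "\<forall>x v w. act x (v + w) = act x v + act x w"
    and asm: "\<forall>c x v. act x (sm c v) = sm c (act x v)"
    using assms(3) unfolding g_module_def by blast+
  have "octx sm act h (nil_part sg br h P)"
    unfolding octx_def octx_axioms_def
    using vs aa asm assms(4) by blast
  then show ?thesis by (rule octx.main_loc)
qed

end
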